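(* Let $n\ge 2$ and let $P=(P_1,\dots,P_t)$ be a partition of $\{1,\dots,n+1\}$. Let $\Delta_i$ be a simplex of dimension $|P_i|$ for $i=1,\dots,t$, so that $\Delta_1\times\dots\times\Delta_t$ is an $(n+1)$-dimensional convex polytope. Then ${\cal K}(P)$ is isomorphic to the boundary complex of the polar (dual) polytope of $\Delta_1\times\dots\times\Delta_t$.
   Context: For a partition $P=(P_1,\dots,P_t)$ of $\{1,\dots,n+1\}$, ${\cal K}(P)$ is the simplicial complex on the vertex set $\{1,\dots,n+1\}\cup\{p_1,\dots,p_t\}$ ($t$ new vertices) whose $n$-faces are the sets $\{y_1,\dots,y_{n+1}\}$ with, for each $i$, $y_i=i$ or $y_i=p_j$ where $i\in P_j$, subject to the $y_i$ being pairwise distinct; its faces are all nonempty subsets of these. The boundary complex of a simplicial polytope is the abstract simplicial complex whose faces are the vertex sets of its proper faces; isomorphism means a vertex bijection mapping faces exactly onto faces. *)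

theory Defs
  imports "HOL-Analysis.Analysis"
begin

text \<open>Partition P = (P_1,...,P_t) of {1..n+1}, given as a list (0-indexed blocks).\<close>
definition is_partition :: "nat \<Rightarrow> nat set list \<Rightarrow> bool" where
  "is_partition n P \<longleftrightarrow>
     (\<forall>j<length P. P!j \<noteq> {}) \<and>
     (\<forall>j<length P. \<forall>j'<length P. j \<noteq> j' \<longrightarrow> P!j \<inter> P!j' = {}) \<and>
     \<Union>(set P) = {1..n+1}"

text \<open>Vertices of K(P): Inl i for i in {1..n+1}, Inr j for the new vertex p_j.\<close>
definition K_vertices :: "nat \<Rightarrow> nat set list \<Rightarrow> (nat + nat) set" where
  "K_vertices n P = Inl ` {1..n+1} \<union> Inr ` {..<length P}"

definition K_facets :: "nat \<Rightarrow> nat set list \<Rightarrow> (nat + nat) set set" where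
  "K_facets n P = { y ` {1..n+1} | y.
      (\<forall>i\<in>{1..n+1}. y i = Inl i \<or> (\<exists>j<length P. i \<in> P!j \<and> y i = Inr j))
      \<and> inj_on y {1..n+1} }"

definition K_faces :: "nat \<Rightarrow> nat set list \<Rightarrow> (nat + nat) set set" where
  "K_faces n P = {\<sigma>. \<sigma> \<noteq> {} \<and> (\<exists>F\<in>K_facets n P. \<sigma> \<subseteq> F)}"

definition bd_vertices :: "'a::euclidean_space set \<Rightarrow> 'a set" where
  "bd_vertices Q = {v. v extreme_point_of Q}"

definition bd_faces :: "'a::euclidean_space set \<Rightarrow> 'a set set" where
  "bd_faces Q = {{v. v extreme_point_of Q \<and> v \<in> F} | F. F face_of Q \<and> F \<noteq> {} \<and> F \<noteq> Q}"

definition polar_dual :: "'a::real_inner set \<Rightarrow> 'a set" where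
  "polar_dual S = {y. \<forall>x\<in>S. inner x y \<le> 1}"

definition complex_iso ::
  "'a set \<Rightarrow> 'a set set \<Rightarrow> 'b set \<Rightarrow> 'b set set \<Rightarrow> bool" where
  "complex_iso V1 F1 V2 F2 \<longleftrightarrow>
     (\<exists>f. bij_betw f V1 V2 \<and> (\<lambda>\<sigma>. f ` \<sigma>) ` F1 = F2)"

definition block_proj :: "'d set \<Rightarrow> real^'d \<Rightarrow> real^'d" where
  "block_proj B x = (\<chi> k. if k \<in> B then x $ k else 0)"

end

theory Submission
  imports Defs
begin

definition bary :: "'a::real_vector set \<Rightarrow> 'a \<Rightarrow> 'a \<Rightarrow> real" where
  "bary C z = (THE \<mu>. (\<forall>v. v \<notin> C \<longrightarrow> \<mu> v = 0) \<and> sum \<mu> C = 1 \<and> (\<Sum>v\<in>C. \<mu> v *\<^sub>R v) = z)"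

lemma bary_uniq:
  fixes C :: "'a::real_vector set"
  assumes fin: "finite C" and ind: "\<not> affine_dependent C"
    and m1: "(\<forall>v. v \<notin> C \<longrightarrow> \<mu>1 v = 0) \<and> sum \<mu>1 C = 1 \<and> (\<Sum>v\<in>C. \<mu>1 v *\<^sub>R v) = z"
    and m2: "(\<forall>v. v \<notin> C \<longrightarrow> \<mu>2 v = 0) \<and> sum \<mu>2 C = 1 \<and> (\<Sum>v\<in>C. \<mu>2 v *\<^sub>R v) = z"
  shows "\<mu>1 = \<mu>2"
proof -
  define U where "U v = \<mu>1 v - \<mu>2 v" for v
  have "sum U C = 0" using m1 m2 by (simp add: U_def sum_subtractf)
  moreover have "(\<Sum>v\<in>C. U v *\<^sub>R v) = 0"
    using m1 m2 by (simp add: U_def scaleR_diff_left sum_subtractf)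
  ultimately have "\<forall>v\<in>C. U v = 0" using ind affine_dependent_explicit_finite[OF fin] by blast
  then show ?thesis using m1 m2 by (auto simp: U_def fun_eq_iff)
qed

lemma bary_eq:
  fixes C :: "'a::real_vector set"
  assumes fin: "finite C" and ind: "\<not> affine_dependent C"
    and m: "(\<forall>v. v \<notin> C \<longrightarrow> \<mu> v = 0) \<and> sum \<mu> C = 1 \<and> (\<Sum>v\<in>C. \<mu> v *\<^sub>R v) = z"
  shows "bary C z = \<mu>"
  unfolding bary_def
  apply (rule the_equality)
  using m apply blast
  using bary_uniq[OF fin ind _ m] by blast

lemma bary_props:
  fixes C :: "'a::real_vector set"
  assumes fin: "finite C" and ind: "\<not> affine_dependent C" and z: "z \<in> affine hull C"
  shows "(\<forall>v. v \<notin> C \<longrightarrow> bary C z v = 0) \<and> sum (bary C z) C = 1 \<and> (\<Sum>v\<in>C. bary C z v *\<^sub>R v) = z"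
proof -
  obtain u where u: "sum u C = 1" "(\<Sum>v\<in>C. u v *\<^sub>R v) = z"
    using z affine_hull_finite[OF fin] by blast
  define \<mu> where "\<mu> v = (if v \<in> C then u v else 0)" for v
  have m: "(\<forall>v. v \<notin> C \<longrightarrow> \<mu> v = 0) \<and> sum \<mu> C = 1 \<and> (\<Sum>v\<in>C. \<mu> v *\<^sub>R v) = z"
    using u by (simp add: \<mu>_def)
  show ?thesis using bary_eq[OF fin ind m] m by simp
qed

lemma bary_affine:
  fixes C :: "'a::real_vector set"
  assumes fin: "finite C" and ind: "\<not> affine_dependent C"
    and x: "x \<in> affine hull C" and y: "y \<in> affine hull C" and w: "w \<in> affine hull C"
  shows "bary C (s *\<^sub>R x + t *\<^sub>R y + (1 - s - t) *\<^sub>R w) v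
       = s * bary C x v + t * bary C y v + (1 - s - t) * bary C w v"
proof -
  note px = bary_props[OF fin ind x] and py = bary_props[OF fin ind y] and pw = bary_props[OF fin ind w]
  define \<mu> where "\<mu> v = s * bary C x v + t * bary C y v + (1 - s - t) * bary C w v" for v
  have "(\<forall>v. v \<notin> C \<longrightarrow> \<mu> v = 0)" using px py pw by (simp add: \<mu>_def)
  moreover have "sum \<mu> C = 1"
    using px py pw by (simp add: \<mu>_def sum.distrib sum_distrib_left[symmetric])
  moreover have "(\<Sum>v\<in>C. \<mu> v *\<^sub>R v) = s *\<^sub>R x + t *\<^sub>R y + (1 - s - t) *\<^sub>R w"
  proof -
    have "(\<Sum>v\<in>C. \<mu> v *\<^sub>R v) = s *\<^sub>R (\<Sum>v\<in>C. bary C x v *\<^sub>R v) + t *\<^sub>R (\<Sum>v\<in>C. bary C y v *\<^sub>R v)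
        + (1 - s - t) *\<^sub>R (\<Sum>v\<in>C. bary C w v *\<^sub>R v)"
      by (simp add: \<mu>_def scaleR_add_left sum.distrib scaleR_sum_right)
    then show ?thesis using px py pw by simp
  qed
  ultimately have "bary C (s *\<^sub>R x + t *\<^sub>R y + (1 - s - t) *\<^sub>R w) = \<mu>"
    by (intro bary_eq[OF fin ind]) blast
  then show ?thesis by (simp add: \<mu>_def)
qed

lemma bary_convex:
  fixes C :: "'a::real_vector set"
  assumes fin: "finite C" and ind: "\<not> affine_dependent C" and z: "z \<in> affine hull C"
  shows "z \<in> convex hull C \<longleftrightarrow> (\<forall>v\<in>C. bary C z v \<ge> 0)"
proof
  assume "z \<in> convex hull C"
  then obtain u where u: "\<forall>x\<in>C. 0 \<le> u x" "sum u C = 1" "(\<Sum>v\<in>C. u v *\<^sub>R v) = z"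
    using convex_hull_finite[OF fin] by blast
  define \<mu> where "\<mu> v = (if v \<in> C then u v else 0)" for v
  have m: "(\<forall>v. v \<notin> C \<longrightarrow> \<mu> v = 0) \<and> sum \<mu> C = 1 \<and> (\<Sum>v\<in>C. \<mu> v *\<^sub>R v) = z"
    using u by (simp add: \<mu>_def)
  show "\<forall>v\<in>C. bary C z v \<ge> 0" using bary_eq[OF fin ind m] u by (simp add: \<mu>_def)
next
  assume "\<forall>v\<in>C. bary C z v \<ge> 0"
  then show "z \<in> convex hull C" using bary_props[OF fin ind z] convex_hull_finite[OF fin] by blast
qed

lemma bary_center:
  fixes C :: "'a::real_vector set"
  assumes fin: "finite C" and ind: "\<not> affine_dependent C" and T: "T \<subseteq> C" "T \<noteq> {}"
  shows "bary C (\<Sum>v\<in>T. (1 / real (card T)) *\<^sub>R v) = (\<lambda>v. if v \<in> T then 1 / real (card T) else 0)"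
proof (rule bary_eq[OF fin ind])
  have finT: "finite T" using T fin finite_subset by blast
  have cT: "card T > 0" using finT T by (simp add: card_gt_0_iff)
  have "sum (\<lambda>v. if v \<in> T then 1 / real (card T) else 0) C = sum (\<lambda>v. 1 / real (card T)) (C \<inter> T)"
    by (simp only: sum.inter_restrict[OF fin])
  also have "C \<inter> T = T" using T by blast
  finally have s: "sum (\<lambda>v. if v \<in> T then 1 / real (card T) else 0) C = 1" using cT by simp
  have "(\<Sum>v\<in>C. (if v \<in> T then 1 / real (card T) else 0) *\<^sub>R v)
      = (\<Sum>v\<in>C. if v \<in> T then (1 / real (card T)) *\<^sub>R v else 0)"
    by (rule sum.cong) auto
  also have "\<dots> = (\<Sum>v\<in>C \<inter> T. (1 / real (card T)) *\<^sub>R v)"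
    by (simp add: sum.inter_restrict[OF fin])
  also have "C \<inter> T = T" using T by blast
  finally show "(\<forall>v. v \<notin> C \<longrightarrow> (if v \<in> T then 1 / real (card T) else 0) = 0) \<and>
    sum (\<lambda>v. if v \<in> T then 1 / real (card T) else 0) C = 1 \<and>
    (\<Sum>v\<in>C. (if v \<in> T then 1 / real (card T) else 0) *\<^sub>R v) = (\<Sum>v\<in>T. (1 / real (card T)) *\<^sub>R v)"
    using s T by auto
qed

lemma bary_vertex:
  fixes C :: "'a::real_vector set"
  assumes fin: "finite C" and ind: "\<not> affine_dependent C" and w: "w \<in> C"
  shows "bary C w v = (if v = w then 1 else 0)"
  using bary_center[OF fin ind, of "{w}"] w by auto

lemma linear_inner_rep:
  fixes g :: "'a::euclidean_space \<Rightarrow> real"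
  assumes "linear g"
  shows "\<exists>r. \<forall>z. g z = inner r z"
proof (intro exI allI)
  fix z
  have "g z = g (\<Sum>b\<in>Basis. (inner z b) *\<^sub>R b)" by (simp add: euclidean_representation)
  also have "\<dots> = (\<Sum>b\<in>Basis. inner z b * g b)"
    by (simp add: linear_sum[OF assms] linear_scale[OF assms])
  also have "\<dots> = inner (\<Sum>b\<in>Basis. g b *\<^sub>R b) z"
    by (simp add: inner_sum_right inner_commute mult.commute)
  finally show "g z = inner (\<Sum>b\<in>Basis. g b *\<^sub>R b) z" .
qed

lemma bary_affine_fun:
  fixes C :: "'a::euclidean_space set" and \<pi> :: "'a \<Rightarrow> 'a"
  assumes fin: "finite C" and ind: "\<not> affine_dependent C" and lin: "linear \<pi>"
    and inaff: "\<And>z. \<pi> z \<in> affine hull C"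
  shows "\<exists>r \<beta>. \<forall>z. bary C (\<pi> z) v = inner r z + \<beta>"
proof -
  have p0: "\<pi> 0 = 0" using lin by (simp add: linear_0)
  have a0: "0 \<in> affine hull C" using inaff[of 0] p0 by simp
  define g where "g z = bary C (\<pi> z) v - bary C 0 v" for z
  have "linear g"
  proof (rule linearI)
    fix x y
    have "\<pi> (x + y) = 1 *\<^sub>R \<pi> x + 1 *\<^sub>R \<pi> y + (1 - 1 - 1) *\<^sub>R 0"
      by (simp add: linear_add[OF lin])
    then have "bary C (\<pi> (x + y)) v = 1 * bary C (\<pi> x) v + 1 * bary C (\<pi> y) v + (1 - 1 - 1) * bary C 0 v"
      using bary_affine[OF fin ind inaff inaff a0, of 1 x 1 y v] by simp
    then show "g (x + y) = g x + g y" by (simp add: g_def)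
  next
    fix c x
    have "\<pi> (c *\<^sub>R x) = c *\<^sub>R \<pi> x + 0 *\<^sub>R \<pi> x + (1 - c - 0) *\<^sub>R 0"
      by (simp add: linear_scale[OF lin])
    then have "bary C (\<pi> (c *\<^sub>R x)) v = c * bary C (\<pi> x) v + 0 * bary C (\<pi> x) v + (1 - c - 0) * bary C 0 v"
      using bary_affine[OF fin ind inaff inaff a0, of c x 0 x v] by simp
    then show "g (c *\<^sub>R x) = c *\<^sub>R g x" by (simp add: g_def algebra_simps)
  qed
  then obtain r where r: "\<forall>z. g z = inner r z" using linear_inner_rep by blast
  show ?thesis by (rule exI[of _ r], rule exI[of _ "bary C 0 v"]) (use r g_def in \<open>auto simp: algebra_simps\<close>)
qed

lemma sum_pos_weights_zero:
  fixes f :: "'i \<Rightarrow> real"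
  assumes "finite A" "\<And>x. x\<in>A \<Longrightarrow> g x > 0" "\<And>x. x\<in>A \<Longrightarrow> f x \<le> 0"
    "(\<Sum>x\<in>A. g x * f x) = 0" "x \<in> A"
  shows "f x = 0"
proof -
  have "(\<Sum>x\<in>A. - (g x * f x)) = 0" using assms(4) by (simp add: sum_negf)
  moreover have nn: "\<forall>x\<in>A. 0 \<le> - (g x * f x)"
  proof
    fix y assume y: "y \<in> A"
    have "g y \<ge> 0" using assms(2)[OF y] by simp
    moreover have "f y \<le> 0" using assms(3)[OF y] .
    ultimately have "g y * f y \<le> 0" by (rule mult_nonneg_nonpos)
    then show "0 \<le> - (g y * f y)" by linarith
  qed
  ultimately have "- (g x * f x) = 0" 
    using sum_nonneg_eq_0_iff[OF assms(1), of "\<lambda>x. - (g x * f x)"] assms(5) by blast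
  then have "g x * f x = 0" by simp
  then show ?thesis using assms(2)[OF assms(5)] by simp
qed


lemma geo:
  fixes u :: "'i \<Rightarrow> 'a::euclidean_space" and Q :: "'a set"
  assumes finI: "finite I"
    and blkI: "\<And>j. j \<in> J \<Longrightarrow> blk j \<subseteq> I"
    and cover: "I \<subseteq> (\<Union>j\<in>J. blk j)"
    and two: "\<And>j a. j\<in>J \<Longrightarrow> a \<in> I \<Longrightarrow> \<not> blk j \<subseteq> {a}"
    and gpos: "\<And>a. a\<in>I \<Longrightarrow> \<gamma> a > 0"
    and G1: "Q = {x. \<forall>a\<in>I. inner x (u a) \<le> 1}"
    and G2: "\<And>j. j\<in>J \<Longrightarrow> (\<Sum>a\<in>blk j. \<gamma> a *\<^sub>R u a) = 0"
    and G3: "\<And>\<sigma>. \<sigma> \<subseteq> I \<Longrightarrow> (\<forall>j\<in>J. \<not> blk j \<subseteq> \<sigma>) \<Longrightarrow> \<exists>x\<in>Q. {a\<in>I. inner x (u a) = 1} = \<sigma>"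
    and Ine: "I \<noteq> {}"
  shows "complex_iso I {\<sigma>. \<sigma>\<noteq>{} \<and> \<sigma> \<subseteq> I \<and> (\<forall>j\<in>J. \<not> blk j \<subseteq> \<sigma>)}
           (bd_vertices (polar_dual Q)) (bd_faces (polar_dual Q))"
proof -
  define U where "U = u ` I"
  define D where "D = polar_dual Q"
  have finU: "finite U" using finI U_def by simp
  have D_def': "D = {y. \<forall>x\<in>Q. inner x y \<le> 1}" by (simp add: D_def polar_dual_def)
  have uD: "u a \<in> D" if "a \<in> I" for a using that G1 D_def' by auto
  have UD: "U \<subseteq> D" using uD U_def by auto
  have convD: "convex D"
    unfolding convex_def D_def'
  proof (clarsimp)
    fix x y s t z assume h: "\<forall>x\<in>Q. inner x y \<le> 1" "\<forall>xa\<in>Q. inner xa z \<le> 1"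
      "0 \<le> (s::real)" "0 \<le> t" "s + t = 1" "x \<in> Q"
    have "s * inner x y \<le> s * 1" using h by (intro mult_left_mono) auto
    moreover have "t * inner x z \<le> t * 1" using h by (intro mult_left_mono) auto
    ultimately show "inner x (s *\<^sub>R y + t *\<^sub>R z) \<le> 1"
      using h by (simp add: inner_add_right)
  qed
  have blkne: "blk j \<noteq> {}" if "j \<in> J" for j
    using two[OF that] Ine by blast
  have finblk: "finite (blk j)" if "j \<in> J" for j using blkI[OF that] finI finite_subset by blast
  obtain j0 where j0: "j0 \<in> J" using cover Ine by blast
  have zero_conv: "0 \<in> convex hull U"
  proof -
    define \<Gamma> where "\<Gamma> = sum \<gamma> (blk j0)"
    have "\<Gamma> > 0" unfolding \<Gamma>_def
      using sum_pos[OF finblk[OF j0] blkne[OF j0]] gpos blkI[OF j0] by blast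
    have "(\<Sum>a\<in>blk j0. (\<gamma> a / \<Gamma>) *\<^sub>R u a) = (1/\<Gamma>) *\<^sub>R (\<Sum>a\<in>blk j0. \<gamma> a *\<^sub>R u a)"
      by (simp add: scaleR_sum_right)
    also have "\<dots> = 0" using G2[OF j0] by simp
    finally have e: "(\<Sum>a\<in>blk j0. (\<gamma> a / \<Gamma>) *\<^sub>R u a) = 0" .
    have "(\<Sum>a\<in>blk j0. (\<gamma> a / \<Gamma>) *\<^sub>R u a) \<in> convex hull U"
    proof (rule convex_sum[OF finblk[OF j0] convex_convex_hull])
      show "(\<Sum>i\<in>blk j0. \<gamma> i / \<Gamma>) = 1" using \<open>\<Gamma> > 0\<close>
        by (simp add: \<Gamma>_def sum_divide_distrib[symmetric])
      show "0 \<le> \<gamma> i / \<Gamma>" if "i \<in> blk j0" for i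
        using gpos[of i] blkI[OF j0] that \<open>\<Gamma> > 0\<close> by force
      show "u i \<in> convex hull U" if "i \<in> blk j0" for i
        using that blkI[OF j0] U_def by (auto intro: hull_inc)
    qed
    then show ?thesis using e by simp
  qed
  have D_eq: "D = convex hull U"
  proof
    show "convex hull U \<subseteq> D" using UD convD by (rule hull_minimal)
    show "D \<subseteq> convex hull U"
    proof
      fix y assume yD: "y \<in> D"
      show "y \<in> convex hull U"
      proof (rule ccontr)
        assume ny: "y \<notin> convex hull U"
        have "closed (convex hull U)"
          by (simp add: compact_imp_closed finU finite_imp_compact_convex_hull)
        then obtain a b where ab: "inner a y < b" "\<forall>x\<in>convex hull U. b < inner a x"
          using separating_hyperplane_closed_point[OF convex_convex_hull _ ny] by blast
        have bneg: "b < 0" using ab(2) zero_conv by (metis inner_zero_right)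
        define x where "x = (1/b) *\<^sub>R a"
        have "x \<in> Q" unfolding G1 mem_Collect_eq
        proof
          fix a' assume a': "a' \<in> I"
          then have "u a' \<in> convex hull U" unfolding U_def by (intro hull_inc imageI)
          then have "b < inner a (u a')" using ab(2) by blast
          then have "inner a (u a') / b < 1" using bneg by (simp only: divide_less_eq) simp
          then show "inner x (u a') \<le> 1" unfolding x_def by simp
        qed
        moreover have "inner x y > 1"
        proof -
          have "inner a y / b > 1" using ab(1) bneg by (simp only: less_divide_eq) simp
          then show ?thesis unfolding x_def by simp
        qed
        ultimately show False using yD unfolding D_def' by fastforce
      qed
    qed
  qed
  define sg where "sg x = {a\<in>I. inner x (u a) = 1}" for x
  have face_x: "(D \<inter> {y. inner x y = 1}) face_of D" if xQ: "x \<in> Q" for x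
  proof (rule face_of_Int_supporting_hyperplane_le[OF convD])
    fix y assume "y \<in> D"
    then have "\<forall>x'\<in>Q. inner x' y \<le> 1" unfolding D_def' by simp
    then show "inner x y \<le> 1" using xQ by blast
  qed
  have F_conv: "D \<inter> {y. inner x y = 1} = convex hull (u ` sg x)" if xQ: "x \<in> Q" for x
  proof -
    have "(D \<inter> {y. inner x y = 1}) face_of convex hull U" using face_x[OF xQ] unfolding D_eq[symmetric] .
    then obtain S' where S': "S' \<subseteq> U" "D \<inter> {y. inner x y = 1} = convex hull S'"
      by (rule face_of_convex_hull_subset[OF finite_imp_compact[OF finU]])
    have "S' \<subseteq> u ` sg x"
    proof
      fix s assume s: "s \<in> S'"
      have "s \<in> convex hull S'" using s hull_subset[of S' convex] by blast
      then have s1: "s \<in> D \<inter> {y. inner x y = 1}" using S'(2) by simp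
      from s S'(1) obtain a where a: "a \<in> I" "s = u a" unfolding U_def by blast
      have "a \<in> sg x" using s1 a unfolding sg_def by simp
      then show "s \<in> u ` sg x" using a by simp
    qed
    then have "convex hull S' \<subseteq> convex hull (u ` sg x)" by (rule hull_mono)
    then have "D \<inter> {y. inner x y = 1} \<subseteq> convex hull (u ` sg x)" using S'(2) by simp
    moreover have "convex hull (u ` sg x) \<subseteq> D \<inter> {y. inner x y = 1}"
    proof (rule hull_minimal)
      show "u ` sg x \<subseteq> D \<inter> {y. inner x y = 1}"
      proof
        fix s assume "s \<in> u ` sg x"
        then obtain a where a: "a \<in> I" "inner x (u a) = 1" "s = u a" unfolding sg_def by blast
        then show "s \<in> D \<inter> {y. inner x y = 1}" using uD[OF a(1)] by simp
      qed
      show "convex (D \<inter> {y. inner x y = 1})" by (rule face_of_imp_convex[OF face_x[OF xQ]])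
    qed
    ultimately show ?thesis by (rule antisym)
  qed
  have single: "\<exists>x\<in>Q. sg x = {a}" if a: "a \<in> I" for a
  proof -
    have "{a} \<subseteq> I" using a by simp
    moreover have "\<forall>j\<in>J. \<not> blk j \<subseteq> {a}" using two a by blast
    ultimately obtain x where "x \<in> Q" "{a'\<in>I. inner x (u a') = 1} = {a}" using G3 by meson
    then show ?thesis unfolding sg_def by blast
  qed
  have ext: "{v. v extreme_point_of D} = U"
  proof
    show "{v. v extreme_point_of D} \<subseteq> U" using D_eq extreme_point_of_convex_hull by blast
    show "U \<subseteq> {v. v extreme_point_of D}"
    proof
      fix v assume "v \<in> U"
      then obtain a where a: "a \<in> I" "v = u a" using U_def by blast
      obtain x where x: "x \<in> Q" "sg x = {a}" using single[OF a(1)] by blast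
      have "D \<inter> {y. inner x y = 1} = {u a}" using F_conv[OF x(1)] x(2) by simp
      then have "{u a} face_of D" using face_x[OF x(1)] by simp
      then have "u a extreme_point_of D" by (simp only: face_of_singleton)
      then show "v \<in> {v. v extreme_point_of D}" using a by simp
    qed
  qed
  have inj: "inj_on u I"
  proof
    fix a b assume ab: "a \<in> I" "b \<in> I" "u a = u b"
    obtain x where x: "x \<in> Q" "sg x = {a}" using single[OF ab(1)] by blast
    have "a \<in> sg x" using x by simp
    then have "inner x (u a) = 1" unfolding sg_def by simp
    then have "b \<in> sg x" using ab unfolding sg_def by simp
    then show "a = b" using x by simp
  qed
  have G4: "\<not> blk j \<subseteq> sg x" if "x \<in> Q" "j \<in> J" for x j
  proof
    assume sub: "blk j \<subseteq> sg x"
    have "0 = inner x (\<Sum>a\<in>blk j. \<gamma> a *\<^sub>R u a)" using G2[OF that(2)] by simp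
    also have "\<dots> = (\<Sum>a\<in>blk j. \<gamma> a * inner x (u a))" by (simp add: inner_sum_right)
    also have "\<dots> = (\<Sum>a\<in>blk j. \<gamma> a)"
    proof (rule sum.cong)
      fix a assume "a \<in> blk j"
      then have "inner x (u a) = 1" using sub unfolding sg_def by blast
      then show "\<gamma> a * inner x (u a) = \<gamma> a" by simp
    qed simp
    also have "\<dots> > 0"
    proof (rule sum_pos[OF finblk[OF that(2)] blkne[OF that(2)]])
      fix a assume "a \<in> blk j"
      then show "\<gamma> a > 0" using gpos blkI[OF that(2)] by blast
    qed
    finally show False by simp
  qed
  have key: "{v. v extreme_point_of D \<and> v \<in> D \<inter> {y. inner x y = 1}} = u ` sg x" if "x \<in> Q" for x
  proof -
    have "{v. v extreme_point_of D \<and> v \<in> D \<inter> {y. inner x y = 1}} = U \<inter> {y. inner x y = 1}"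
      using ext UD by blast
    also have "\<dots> = u ` sg x" unfolding U_def sg_def by blast
    finally show ?thesis .
  qed
  have zD: "0 \<in> D" using zero_conv D_eq by simp
  have faces: "bd_faces D = (\<lambda>\<sigma>. u ` \<sigma>) ` {\<sigma>. \<sigma>\<noteq>{} \<and> \<sigma> \<subseteq> I \<and> (\<forall>j\<in>J. \<not> blk j \<subseteq> \<sigma>)}"
  proof
    show "(\<lambda>\<sigma>. u ` \<sigma>) ` {\<sigma>. \<sigma>\<noteq>{} \<and> \<sigma> \<subseteq> I \<and> (\<forall>j\<in>J. \<not> blk j \<subseteq> \<sigma>)} \<subseteq> bd_faces D"
    proof
      fix T assume "T \<in> (\<lambda>\<sigma>. u ` \<sigma>) ` {\<sigma>. \<sigma>\<noteq>{} \<and> \<sigma> \<subseteq> I \<and> (\<forall>j\<in>J. \<not> blk j \<subseteq> \<sigma>)}"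
      then obtain \<sigma> where s: "\<sigma> \<noteq> {}" "\<sigma> \<subseteq> I" "\<forall>j\<in>J. \<not> blk j \<subseteq> \<sigma>" and T: "T = u ` \<sigma>"
        by blast
      obtain x where x: "x \<in> Q" "{a\<in>I. inner x (u a) = 1} = \<sigma>" using G3[OF s(2,3)] by blast
      have sgx: "sg x = \<sigma>" using x(2) unfolding sg_def .
      obtain a where a: "a \<in> \<sigma>" using s(1) by blast
      have aI: "a \<in> I" using a s(2) by blast
      have "inner x (u a) = 1" using a x(2) by blast
      then have ne: "D \<inter> {y. inner x y = 1} \<noteq> {}" using uD[OF aI] by blast
      have "0 \<notin> D \<inter> {y. inner x y = 1}" by simp
      then have nD: "D \<inter> {y. inner x y = 1} \<noteq> D" using zD by blast
      have "T = {v. v extreme_point_of D \<and> v \<in> D \<inter> {y. inner x y = 1}}"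
        using key[OF x(1)] sgx T by simp
      then show "T \<in> bd_faces D" unfolding bd_faces_def using face_x[OF x(1)] ne nD by blast
    qed
    show "bd_faces D \<subseteq> (\<lambda>\<sigma>. u ` \<sigma>) ` {\<sigma>. \<sigma>\<noteq>{} \<and> \<sigma> \<subseteq> I \<and> (\<forall>j\<in>J. \<not> blk j \<subseteq> \<sigma>)}"
    proof
      fix T assume "T \<in> bd_faces D"
      then obtain F where F: "T = {v. v extreme_point_of D \<and> v \<in> F}" "F face_of D" "F \<noteq> {}" "F \<noteq> D"
        unfolding bd_faces_def by blast
      have "polytope D" unfolding polytope_def using D_eq finU by blast
      then have "polyhedron D" by (rule polytope_imp_polyhedron)
      then have "F exposed_face_of D" using F(2) exposed_face_of_polyhedron by blast
      then obtain a b where ab: "D \<subseteq> {x. inner a x \<le> b}" "F = D \<inter> {x. inner a x = b}"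
        unfolding exposed_face_of_def by blast
      have b0: "b \<ge> 0" using ab(1) zD by auto
      have bpos: "b > 0"
      proof (rule ccontr)
        assume "\<not> b > 0"
        then have b: "b = 0" using b0 by simp
        have ui0: "inner a (u i) = 0" if i: "i \<in> I" for i
        proof -
          obtain j where j: "j \<in> J" "i \<in> blk j" using cover i by blast
          have "(\<Sum>a'\<in>blk j. \<gamma> a' * inner a (u a')) = inner a (\<Sum>a'\<in>blk j. \<gamma> a' *\<^sub>R u a')"
            by (simp add: inner_sum_right)
          also have "\<dots> = 0" using G2[OF j(1)] by simp
          finally have s0: "(\<Sum>a'\<in>blk j. \<gamma> a' * inner a (u a')) = 0" .
          show ?thesis
          proof (rule sum_pos_weights_zero[OF finblk[OF j(1)] _ _ s0 j(2)])
            fix y assume y: "y \<in> blk j"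
            then have yI: "y \<in> I" using blkI[OF j(1)] by blast
            show "\<gamma> y > 0" using gpos[OF yI] .
            have "u y \<in> D" using uD[OF yI] .
            then show "inner a (u y) \<le> 0" using ab(1) b by blast
          qed
        qed
        have "U \<subseteq> {x. inner a x = 0}"
        proof
          fix v assume "v \<in> U"
          then obtain i where "i \<in> I" "v = u i" unfolding U_def by blast
          then show "v \<in> {x. inner a x = 0}" using ui0 by simp
        qed
        then have "convex hull U \<subseteq> {x. inner a x = 0}"
          by (rule hull_minimal) (rule convex_hyperplane)
        then have "D \<subseteq> {x. inner a x = b}" using D_eq b by simp
        then have "F = D" using ab(2) by blast
        then show False using F(4) by simp
      qed
      define x where "x = (1/b) *\<^sub>R a"
      have eqv: "inner a y = b \<longleftrightarrow> inner x y = 1" for y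
        using bpos unfolding x_def by (auto simp: field_simps)
      have Feq: "F = D \<inter> {y. inner x y = 1}" using ab(2) eqv by blast
      have xQ: "x \<in> Q" unfolding G1 mem_Collect_eq
      proof
        fix i assume "i \<in> I"
        then have "inner a (u i) \<le> b" using ab(1) uD by blast
        then show "inner x (u i) \<le> 1" using bpos unfolding x_def by (simp add: field_simps)
      qed
      have "sg x \<noteq> {}" using F(3) Feq F_conv[OF xQ] by auto
      moreover have "T = u ` sg x" using F(1) Feq key[OF xQ] by simp
      moreover have "sg x \<subseteq> I" unfolding sg_def by blast
      ultimately show "T \<in> (\<lambda>\<sigma>. u ` \<sigma>) ` {\<sigma>. \<sigma>\<noteq>{} \<and> \<sigma> \<subseteq> I \<and> (\<forall>j\<in>J. \<not> blk j \<subseteq> \<sigma>)}"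
        using G4[OF xQ] by blast
    qed
  qed
  show ?thesis unfolding complex_iso_def
  proof (intro exI conjI)
    show "bij_betw u I (bd_vertices (polar_dual Q))"
      using inj ext unfolding bij_betw_def bd_vertices_def D_def U_def by simp
    show "(\<lambda>\<sigma>. u ` \<sigma>) ` {\<sigma>. \<sigma>\<noteq>{} \<and> \<sigma> \<subseteq> I \<and> (\<forall>j\<in>J. \<not> blk j \<subseteq> \<sigma>)} = bd_faces (polar_dual Q)"
      using faces D_def by simp
  qed
qed

lemma complex_iso_trans:
  assumes "complex_iso V1 F1 V2 F2" "complex_iso V2 F2 V3 F3"
  shows "complex_iso V1 F1 V3 F3"
proof -
  obtain f where f: "bij_betw f V1 V2" "(\<lambda>\<sigma>. f ` \<sigma>) ` F1 = F2"
    using assms(1) unfolding complex_iso_def by blast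
  obtain g where g: "bij_betw g V2 V3" "(\<lambda>\<sigma>. g ` \<sigma>) ` F2 = F3"
    using assms(2) unfolding complex_iso_def by blast
  have "(\<lambda>\<sigma>. (g \<circ> f) ` \<sigma>) ` F1 = (\<lambda>\<sigma>. g ` \<sigma>) ` ((\<lambda>\<sigma>. f ` \<sigma>) ` F1)"
    by (simp add: image_comp image_image)
  also have "\<dots> = F3" using f(2) g(2) by simp
  finally show ?thesis unfolding complex_iso_def using bij_betw_trans[OF f(1) g(1)] by blast
qed

lemma iso_blocks:
  assumes h: "bij_betw h V W" and Bl: "\<And>j. j\<in>J \<Longrightarrow> Bl j \<subseteq> V"
    and hB: "\<And>j. j \<in> J \<Longrightarrow> h ` Bl j = Bl' j"
  shows "complex_iso V {\<sigma>. \<sigma>\<noteq>{} \<and> \<sigma> \<subseteq> V \<and> (\<forall>j\<in>J. \<not> Bl j \<subseteq> \<sigma>)}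
                     W {\<tau>. \<tau>\<noteq>{} \<and> \<tau> \<subseteq> W \<and> (\<forall>j\<in>J. \<not> Bl' j \<subseteq> \<tau>)}"
proof -
  have inj: "inj_on h V" and im: "h ` V = W" using h unfolding bij_betw_def by auto
  have sub_iff: "Bl' j \<subseteq> h ` \<sigma> \<longleftrightarrow> Bl j \<subseteq> \<sigma>" if s: "\<sigma> \<subseteq> V" and j: "j \<in> J" for \<sigma> j
  proof
    assume a: "Bl' j \<subseteq> h ` \<sigma>"
    show "Bl j \<subseteq> \<sigma>"
    proof
      fix x assume x: "x \<in> Bl j"
      then have "h x \<in> h ` \<sigma>" using a hB[OF j] by blast
      then obtain y where y: "y \<in> \<sigma>" "h x = h y" by blast
      have "x \<in> V" using x Bl[OF j] by blast
      moreover have "y \<in> V" using y s by blast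
      ultimately have "x = y" using y(2) inj unfolding inj_on_def by blast
      then show "x \<in> \<sigma>" using y by simp
    qed
  next
    assume "Bl j \<subseteq> \<sigma>"
    then show "Bl' j \<subseteq> h ` \<sigma>" using hB[OF j] by blast
  qed
  have "(\<lambda>\<sigma>. h ` \<sigma>) ` {\<sigma>. \<sigma>\<noteq>{} \<and> \<sigma> \<subseteq> V \<and> (\<forall>j\<in>J. \<not> Bl j \<subseteq> \<sigma>)}
        = {\<tau>. \<tau>\<noteq>{} \<and> \<tau> \<subseteq> W \<and> (\<forall>j\<in>J. \<not> Bl' j \<subseteq> \<tau>)}"
  proof
    show "(\<lambda>\<sigma>. h ` \<sigma>) ` {\<sigma>. \<sigma>\<noteq>{} \<and> \<sigma> \<subseteq> V \<and> (\<forall>j\<in>J. \<not> Bl j \<subseteq> \<sigma>)}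
        \<subseteq> {\<tau>. \<tau>\<noteq>{} \<and> \<tau> \<subseteq> W \<and> (\<forall>j\<in>J. \<not> Bl' j \<subseteq> \<tau>)}"
    proof
      fix \<tau> assume "\<tau> \<in> (\<lambda>\<sigma>. h ` \<sigma>) ` {\<sigma>. \<sigma>\<noteq>{} \<and> \<sigma> \<subseteq> V \<and> (\<forall>j\<in>J. \<not> Bl j \<subseteq> \<sigma>)}"
      then obtain \<sigma> where s: "\<sigma>\<noteq>{}" "\<sigma> \<subseteq> V" "\<forall>j\<in>J. \<not> Bl j \<subseteq> \<sigma>" "\<tau> = h ` \<sigma>" by blast
      have "\<tau> \<subseteq> W" using s(2,4) im by blast
      moreover have "\<forall>j\<in>J. \<not> Bl' j \<subseteq> \<tau>" using s sub_iff by blast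
      ultimately show "\<tau> \<in> {\<tau>. \<tau>\<noteq>{} \<and> \<tau> \<subseteq> W \<and> (\<forall>j\<in>J. \<not> Bl' j \<subseteq> \<tau>)}" using s by blast
    qed
    show "{\<tau>. \<tau>\<noteq>{} \<and> \<tau> \<subseteq> W \<and> (\<forall>j\<in>J. \<not> Bl' j \<subseteq> \<tau>)}
        \<subseteq> (\<lambda>\<sigma>. h ` \<sigma>) ` {\<sigma>. \<sigma>\<noteq>{} \<and> \<sigma> \<subseteq> V \<and> (\<forall>j\<in>J. \<not> Bl j \<subseteq> \<sigma>)}"
    proof
      fix \<tau> assume "\<tau> \<in> {\<tau>. \<tau>\<noteq>{} \<and> \<tau> \<subseteq> W \<and> (\<forall>j\<in>J. \<not> Bl' j \<subseteq> \<tau>)}"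
      then have t: "\<tau>\<noteq>{}" "\<tau> \<subseteq> W" "\<forall>j\<in>J. \<not> Bl' j \<subseteq> \<tau>" by auto
      define \<sigma> where "\<sigma> = V \<inter> h -` \<tau>"
      have hs: "h ` \<sigma> = \<tau>" using t(2) im unfolding \<sigma>_def by blast
      have sV: "\<sigma> \<subseteq> V" unfolding \<sigma>_def by blast
      have "\<sigma> \<noteq> {}" using hs t(1) by blast
      moreover have "\<forall>j\<in>J. \<not> Bl j \<subseteq> \<sigma>" using sub_iff[OF sV] t(3) hs by blast
      ultimately show "\<tau> \<in> (\<lambda>\<sigma>. h ` \<sigma>) ` {\<sigma>. \<sigma>\<noteq>{} \<and> \<sigma> \<subseteq> V \<and> (\<forall>j\<in>J. \<not> Bl j \<subseteq> \<sigma>)}"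
        using hs sV by blast
    qed
  qed
  then show ?thesis unfolding complex_iso_def using h by blast
qed

lemma block_bij:
  assumes g0: "\<forall>j\<in>J. bij_betw (g j) (Bl j) (C j)"
    and disj0: "\<forall>j\<in>J. \<forall>j'\<in>J. \<forall>s. s \<in> Bl j \<longrightarrow> s \<in> Bl j' \<longrightarrow> j = j'"
    and h0: "\<forall>s. h s = (THE j. j\<in>J \<and> s \<in> Bl j, g (THE j. j \<in> J \<and> s \<in> Bl j) s)"
  shows "bij_betw h (\<Union>j\<in>J. Bl j) (Sigma J C) \<and> (\<forall>j\<in>J. h ` Bl j = {j} \<times> C j)"
proof -
  have g: "bij_betw (g j) (Bl j) (C j)" if "j\<in>J" for j using g0 that by blast
  have disj: "j = j'" if "j\<in>J" "j'\<in>J" "s \<in> Bl j" "s \<in> Bl j'" for j j' s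
    using disj0 that by blast
  have h_def: "h s = (THE j. j\<in>J \<and> s \<in> Bl j, g (THE j. j \<in> J \<and> s \<in> Bl j) s)" for s
    using h0 by blast
  have th: "(THE j. j\<in>J \<and> s \<in> Bl j) = j" if "j \<in> J" "s \<in> Bl j" for j s
    by (rule the_equality) (use that disj in blast)+
  have hs: "h s = (j, g j s)" if "j \<in> J" "s \<in> Bl j" for j s
    unfolding h_def th[OF that] ..
  have hB: "h ` Bl j = {j} \<times> C j" if j: "j\<in>J" for j
  proof -
    have "h ` Bl j = (\<lambda>s. (j, g j s)) ` Bl j" using hs[OF j] by (intro image_cong) auto
    also have "\<dots> = {j} \<times> (g j ` Bl j)" by blast
    also have "g j ` Bl j = C j" using g[OF j] unfolding bij_betw_def by blast
    finally show ?thesis .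
  qed
  have "bij_betw h (\<Union>j\<in>J. Bl j) (Sigma J C)"
    unfolding bij_betw_def
  proof
    show "inj_on h (\<Union>j\<in>J. Bl j)"
    proof
      fix s s' assume "s \<in> (\<Union>j\<in>J. Bl j)" "s' \<in> (\<Union>j\<in>J. Bl j)" and e: "h s = h s'"
      then obtain j j' where jj: "j\<in>J" "s \<in> Bl j" "j'\<in>J" "s' \<in> Bl j'" by blast
      have "(j, g j s) = (j', g j' s')" using e hs jj by metis
      then have "j = j'" "g j s = g j s'" by auto
      then show "s = s'" using g[OF jj(1)] jj unfolding bij_betw_def inj_on_def by blast
    qed
    have "h ` (\<Union>j\<in>J. Bl j) = (\<Union>j\<in>J. h ` Bl j)" by blast
    also have "\<dots> = (\<Union>j\<in>J. {j} \<times> C j)" using hB by simp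
    also have "\<dots> = Sigma J C" by blast
    finally show "h ` (\<Union>j\<in>J. Bl j) = Sigma J C" .
  qed
  then show ?thesis using hB by blast
qed

lemma eq_trans3: "a = b \<Longrightarrow> c = d \<Longrightarrow> a = c \<Longrightarrow> b = d" by simp

definition Kblk :: "nat set list \<Rightarrow> nat \<Rightarrow> (nat + nat) set" where
  "Kblk P j = Inl ` (P!j) \<union> {Inr j}"

lemma partition_facts:
  assumes part: "is_partition n P"
  shows "\<And>j. j < length P \<Longrightarrow> P!j \<subseteq> {1..n+1}"
    and "\<And>j j' i. j < length P \<Longrightarrow> j' < length P \<Longrightarrow> i \<in> P!j \<Longrightarrow> i \<in> P!j' \<Longrightarrow> j = j'"
    and "\<And>i. i \<in> {1..n+1} \<Longrightarrow> \<exists>j<length P. i \<in> P!j"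
    and "\<And>j. j < length P \<Longrightarrow> P!j \<noteq> {}"
    and "\<And>j. j < length P \<Longrightarrow> finite (P!j)"
proof -
  have pp: "(\<forall>j<length P. P!j \<noteq> {}) \<and> (\<forall>j<length P. \<forall>j'<length P. j \<noteq> j' \<longrightarrow> P!j \<inter> P!j' = {})
    \<and> \<Union>(set P) = {1..n+1}" using part unfolding is_partition_def .
  have p1: "\<forall>j<length P. P!j \<noteq> {}" using pp by (rule conjunct1)
  have p2: "\<forall>j<length P. \<forall>j'<length P. j \<noteq> j' \<longrightarrow> P!j \<inter> P!j' = {}"
    using pp[THEN conjunct2] by (rule conjunct1)
  have p3: "\<Union>(set P) = {1..n+1}" using pp[THEN conjunct2] by (rule conjunct2)
  show sub: "P!j \<subseteq> {1..n+1}" if "j < length P" for j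
  proof -
    have "P!j \<in> set P" by (rule nth_mem[OF that])
    then show ?thesis using p3 by blast
  qed
  show "j = j'" if "j < length P" "j' < length P" "i \<in> P!j" "i \<in> P!j'" for j j' i
  proof (rule ccontr)
    assume "j \<noteq> j'"
    then have "P!j \<inter> P!j' = {}" using p2 that(1,2) by simp
    then show False using that(3,4) by blast
  qed
  show "\<exists>j<length P. i \<in> P!j" if "i \<in> {1..n+1}" for i
  proof -
    have "i \<in> \<Union>(set P)" using p3 that by simp
    then obtain A where A: "A \<in> set P" "i \<in> A" by (rule UnionE)
    then obtain k where "k < length P" "P!k = A" by (auto simp: in_set_conv_nth)
    then show ?thesis using A(2) by blast
  qed
  show "P!j \<noteq> {}" if "j < length P" for j using p1 that by blast
  show "finite (P!j)" if "j < length P" for j using sub[OF that] by (rule finite_subset) simp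
qed

lemma card_Kblk:
  assumes "finite (P!j)"
  shows "card (Kblk P j) = card (P!j) + 1"
proof -
  have "card (Inl ` (P!j) :: (nat+nat) set) = card (P!j)" by (rule card_image) simp
  moreover have "Inr j \<notin> (Inl ` (P!j) :: (nat+nat) set)" by blast
  ultimately show ?thesis unfolding Kblk_def using assms by simp
qed

lemma KV_union:
  assumes part: "is_partition n P"
  shows "K_vertices n P = (\<Union>j\<in>{..<length P}. Kblk P j)"
proof -
  note pf = partition_facts[OF part]
  show ?thesis
  proof
    show "K_vertices n P \<subseteq> (\<Union>j\<in>{..<length P}. Kblk P j)"
    proof
      fix s assume "s \<in> K_vertices n P"
      then consider (l) i where "i \<in> {1..n+1}" "s = Inl i" | (r) j where "j < length P" "s = Inr j"
        unfolding K_vertices_def by blast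
      then show "s \<in> (\<Union>j\<in>{..<length P}. Kblk P j)"
      proof cases
        case l
        then obtain j where "j < length P" "i \<in> P!j" using pf(3) by blast
        then show ?thesis using l unfolding Kblk_def by blast
      next
        case r then show ?thesis unfolding Kblk_def by blast
      qed
    qed
    show "(\<Union>j\<in>{..<length P}. Kblk P j) \<subseteq> K_vertices n P"
      unfolding Kblk_def K_vertices_def using pf(1) by blast
  qed
qed

lemma K_faces_char:
  assumes part: "is_partition n P"
  shows "K_faces n P = {\<sigma>. \<sigma>\<noteq>{} \<and> \<sigma> \<subseteq> K_vertices n P \<and> (\<forall>j\<in>{..<length P}. \<not> Kblk P j \<subseteq> \<sigma>)}"
proof -
  note pf = partition_facts[OF part]
  show ?thesis
  proof
    show "K_faces n P \<subseteq> {\<sigma>. \<sigma>\<noteq>{} \<and> \<sigma> \<subseteq> K_vertices n P \<and> (\<forall>j\<in>{..<length P}. \<not> Kblk P j \<subseteq> \<sigma>)}"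
    proof
      fix \<sigma> assume "\<sigma> \<in> K_faces n P"
      then obtain y where s: "\<sigma> \<noteq> {}" "\<sigma> \<subseteq> y ` {1..n+1}"
        and y: "\<forall>i\<in>{1..n+1}. y i = Inl i \<or> (\<exists>j<length P. i \<in> P!j \<and> y i = Inr j)"
        and inj: "inj_on y {1..n+1}"
        unfolding K_faces_def K_facets_def by blast
      have "\<sigma> \<subseteq> K_vertices n P"
      proof
        fix s assume "s \<in> \<sigma>"
        then obtain i where i: "i \<in> {1..n+1}" "s = y i" using s by blast
        then show "s \<in> K_vertices n P" using y unfolding K_vertices_def by blast
      qed
      moreover have "\<not> Kblk P j \<subseteq> \<sigma>" if j: "j < length P" for j
      proof
        assume a: "Kblk P j \<subseteq> \<sigma>"
        have "Kblk P j \<subseteq> y ` (P!j)"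
        proof
          fix s assume sK: "s \<in> Kblk P j"
          then obtain i where i: "i \<in> {1..n+1}" "s = y i" using a s by blast
          have "i \<in> P!j"
          proof (cases "y i = Inl i")
            case True
            then show ?thesis using sK i unfolding Kblk_def by auto
          next
            case False
            then obtain j' where j': "j' < length P" "i \<in> P!j'" "y i = Inr j'" using y i by blast
            then have "j' = j" using sK i unfolding Kblk_def by auto
            then show ?thesis using j' by simp
          qed
          then show "s \<in> y ` (P!j)" using i by blast
        qed
        then have "card (Kblk P j) \<le> card (y ` (P!j))" using pf(5)[OF j] by (intro card_mono) auto
        also have "\<dots> \<le> card (P!j)" by (rule card_image_le) (use pf(5)[OF j] in blast)
        finally show False using card_Kblk[OF pf(5)[OF j]] by simp
      qed
      ultimately show "\<sigma> \<in> {\<sigma>. \<sigma>\<noteq>{} \<and> \<sigma> \<subseteq> K_vertices n P \<and> (\<forall>j\<in>{..<length P}. \<not> Kblk P j \<subseteq> \<sigma>)}"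
        using s by blast
    qed
    show "{\<sigma>. \<sigma>\<noteq>{} \<and> \<sigma> \<subseteq> K_vertices n P \<and> (\<forall>j\<in>{..<length P}. \<not> Kblk P j \<subseteq> \<sigma>)} \<subseteq> K_faces n P"
    proof
      fix \<sigma> assume "\<sigma> \<in> {\<sigma>. \<sigma>\<noteq>{} \<and> \<sigma> \<subseteq> K_vertices n P \<and> (\<forall>j\<in>{..<length P}. \<not> Kblk P j \<subseteq> \<sigma>)}"
      then have s: "\<sigma>\<noteq>{}" "\<sigma> \<subseteq> K_vertices n P" "\<And>j. j < length P \<Longrightarrow> \<not> Kblk P j \<subseteq> \<sigma>" by auto
      define m where "m j = (SOME s. s \<in> Kblk P j \<and> s \<notin> \<sigma>)" for j
      have m: "m j \<in> Kblk P j" "m j \<notin> \<sigma>" if "j < length P" for j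
      proof -
        have "\<exists>s. s \<in> Kblk P j \<and> s \<notin> \<sigma>" using s(3)[OF that] by blast
        then have "m j \<in> Kblk P j \<and> m j \<notin> \<sigma>" unfolding m_def by (rule someI_ex)
        then show "m j \<in> Kblk P j" "m j \<notin> \<sigma>" by auto
      qed
      define bo where "bo i = (THE j. j < length P \<and> i \<in> P!j)" for i
      have bo: "bo i < length P \<and> i \<in> P!(bo i)" if ir: "i \<in> {1..n+1}" for i
      proof -
        obtain j where j: "j < length P" "i \<in> P!j" using pf(3)[OF ir] by blast
        have "bo i = j" unfolding bo_def
        proof (rule the_equality)
          show "j < length P \<and> i \<in> P!j" using j by simp
          fix j' assume "j' < length P \<and> i \<in> P!j'"
          then show "j' = j" using pf(2)[of j' j i] j by simp
        qed
        then show ?thesis using j by simp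
      qed
      have bo_eq: "bo i = j" if "j < length P" "i \<in> P!j" for i j
        unfolding bo_def
      proof (rule the_equality)
        show "j < length P \<and> i \<in> P!j" using that by simp
        fix j' assume "j' < length P \<and> i \<in> P!j'"
        then show "j' = j" using pf(2)[of j' j i] that by simp
      qed
      define y where "y i = (if m (bo i) = Inl i then Inr (bo i) else Inl i)" for i :: nat
      have yc: "\<forall>i\<in>{1..n+1}. y i = Inl i \<or> (\<exists>j<length P. i \<in> P!j \<and> (y i :: nat + nat) = Inr j)"
      proof
        fix i :: nat assume ir: "i \<in> {1..n+1}"
        show "y i = Inl i \<or> (\<exists>j<length P. i \<in> P!j \<and> (y i :: nat + nat) = Inr j)"
        proof (cases "m (bo i) = Inl i")
          case True
          then have "y i = Inr (bo i)" unfolding y_def by simp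
          then show ?thesis using bo[OF ir] by blast
        next
          case False
          then show ?thesis unfolding y_def by simp
        qed
      qed
      have yL: "y i = Inl i" if "m (bo i) \<noteq> Inl i" for i using that unfolding y_def by simp
      have yR: "y i = Inr (bo i)" if "m (bo i) = Inl i" for i using that unfolding y_def by simp
      have yinj: "inj_on y {1..n+1}"
      proof (rule inj_onI)
        fix i i' assume ii: "i \<in> {1..n+1}" "i' \<in> {1..n+1}" "y i = y i'"
        show "i = i'"
        proof (cases "m (bo i) = Inl i")
          case T: True
          show ?thesis
          proof (cases "m (bo i') = Inl i'")
            case True
            have "Inr (bo i) = (Inr (bo i') :: nat + nat)" using yR[OF T] yR[OF True] ii(3) by (rule eq_trans3)
            then have "bo i = bo i'" by (rule Sum_Type.Inr_inject)
            then have mm: "m (bo i) = m (bo i')" by (rule arg_cong)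
            have "(Inl i :: nat + nat) = Inl i'" using T True mm by (rule eq_trans3)
            then show ?thesis by (rule Sum_Type.Inl_inject)
          next
            case False
            have "(Inr (bo i) :: nat + nat) = Inl i'" using yR[OF T] yL[OF False] ii(3) by (rule eq_trans3)
            then show ?thesis by simp
          qed
        next
          case F: False
          show ?thesis
          proof (cases "m (bo i') = Inl i'")
            case True
            have "(Inl i :: nat + nat) = Inr (bo i')" using yL[OF F] yR[OF True] ii(3) by (rule eq_trans3)
            then show ?thesis by simp
          next
            case False
            have "(Inl i :: nat + nat) = Inl i'" using yL[OF F] yL[OF False] ii(3) by (rule eq_trans3)
            then show ?thesis by (rule Sum_Type.Inl_inject)
          qed
        qed
      qed
      have "y ` {1..n+1} \<in> K_facets n P" unfolding K_facets_def
        apply (rule CollectI)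
        apply (rule exI[of _ y])
        apply (rule conjI[OF refl])
        using yc yinj by (rule conjI)
      moreover have "\<sigma> \<subseteq> y ` {1..n+1}"
      proof
        fix s assume sS: "s \<in> \<sigma>"
        then have "s \<in> K_vertices n P" using s(2) by blast
        then consider (l) i where "i \<in> {1..n+1}" "s = Inl i" | (r) j where "j < length P" "s = Inr j"
          unfolding K_vertices_def by blast
        then show "s \<in> y ` {1..n+1}"
        proof cases
          case l
          have "m (bo i) \<notin> \<sigma>" using m(2) bo[OF l(1)] by blast
          have "Inl i \<in> \<sigma>" using sS unfolding l(2) .
          then have "m (bo i) \<noteq> Inl i" using \<open>m (bo i) \<notin> \<sigma>\<close> by metis
          then have "y i = Inl i" by (rule yL)
          then have "s = y i" using l(2) by (rule ssubst)
          then show ?thesis using l(1) by (rule image_eqI)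
        next
          case r
          have "Inr j \<in> \<sigma>" using sS unfolding r(2) .
          then have "m j \<noteq> Inr j" using m(2)[OF r(1)] by metis
          then obtain i0 where i0: "i0 \<in> P!j" "m j = Inl i0" using m(1)[OF r(1)] unfolding Kblk_def by blast
          have i0r: "i0 \<in> {1..n+1}" using pf(1)[OF r(1)] i0(1) by blast
          have "bo i0 = j" using bo_eq[OF r(1) i0(1)] .
          then have "m (bo i0) = Inl i0" using i0(2) by (rule ssubst)
          then have "y i0 = Inr (bo i0)" by (rule yR)
          also have "\<dots> = s" using \<open>bo i0 = j\<close> r(2) by metis
          finally have "s = y i0" by (rule sym)
          then show ?thesis using i0r by (rule image_eqI)
        qed
      qed
      ultimately show "\<sigma> \<in> K_faces n P" unfolding K_faces_def using s(1) by blast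
    qed
  qed
qed

definition Vb :: "'d set \<Rightarrow> (real^'d) set" where "Vb B = {x. \<forall>k. k \<notin> B \<longrightarrow> x$k = 0}"

lemma bp_lin: "linear (block_proj B)"
  by (rule linearI) (auto simp: block_proj_def vec_eq_iff)

lemma bp_in: "block_proj B z \<in> Vb B" by (simp add: block_proj_def Vb_def)

lemma bp_id: "x \<in> Vb B \<Longrightarrow> block_proj B x = x" by (auto simp: block_proj_def Vb_def vec_eq_iff)

lemma bp_zero: "B \<inter> B' = {} \<Longrightarrow> x \<in> Vb B' \<Longrightarrow> block_proj B x = 0"
  by (auto simp: block_proj_def Vb_def vec_eq_iff)

lemma Vb_subspace: "subspace (Vb B)" by (auto simp: subspace_def Vb_def)

lemma Vb_dim: "dim (Vb B) = card B"
  using dim_substandard_cart[where 'a=real, of B] unfolding Vb_def dim_vec_eq .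

lemma aff_eq:
  fixes C :: "(real^'d) set"
  assumes ind: "\<not> affine_dependent C" and CV: "C \<subseteq> Vb B" and card: "int (card C) = int (card B) + 1"
  shows "affine hull C = Vb B"
proof (rule affine_dim_equal)
  show "affine (affine hull C)" by (rule affine_affine_hull)
  show "affine (Vb B)" by (rule subspace_imp_affine[OF Vb_subspace])
  have "card C \<noteq> 0" using card by linarith
  then have "C \<noteq> {}" by auto
  then show "affine hull C \<noteq> {}" by simp
  show "affine hull C \<subseteq> Vb B" by (rule hull_minimal[of C "Vb B" affine, OF CV subspace_imp_affine[OF Vb_subspace]])
  have "aff_dim (affine hull C) = aff_dim C" by simp
  also have "\<dots> = int (card B)" using aff_dim_affine_independent[OF ind] card by linarith
  also have "\<dots> = aff_dim (Vb B)" using aff_dim_subspace[OF Vb_subspace[of B]] Vb_dim[of B] by simp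
  finally show "aff_dim (affine hull C) = aff_dim (Vb B)" .
qed

theorem theorem2p5:
  fixes n :: nat and P :: "nat set list"
    and e :: "'d::finite \<Rightarrow> nat"
    and S :: "nat \<Rightarrow> (real^'d) set"
    and c :: "real^'d"
  assumes n2: "n \<ge> 2"
    and part: "is_partition n P"
    and e_bij: "bij_betw e UNIV {1..n+1}"
    and simp: "\<forall>j<length P. int (card (P!j)) simplex (S j)"
    and simp_block: "\<forall>j<length P. \<forall>x\<in>S j. \<forall>k. e k \<notin> P!j \<longrightarrow> x $ k = 0"
    and c_int: "c \<in> interior {x. \<forall>j<length P. block_proj {k. e k \<in> P!j} x \<in> S j}"
  shows "complex_iso (K_vertices n P) (K_faces n P)
           (bd_vertices (polar_dual ((\<lambda>x. x - c) ` {x. \<forall>j<length P. block_proj {k. e k \<in> P!j} x \<in> S j})))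
           (bd_faces (polar_dual ((\<lambda>x. x - c) ` {x. \<forall>j<length P. block_proj {k. e k \<in> P!j} x \<in> S j})))"
proof -
  note pf = partition_facts[OF part]
  define L where "L = length P"
  define Bk where "Bk j = {k. e k \<in> P!j}" for j
  define Qs where "Qs = {x. \<forall>j<length P. block_proj {k. e k \<in> P!j} x \<in> S j}"
  define Q' where "Q' = (\<lambda>x. x - c) ` Qs"
  define \<pi> where "\<pi> j = block_proj (Bk j)" for j
  have Qs_def': "Qs = {x. \<forall>j<L. \<pi> j x \<in> S j}" unfolding Qs_def Bk_def \<pi>_def L_def by (rule refl)
  have cardBk: "card (Bk j) = card (P!j)" if j: "j < L" for j
  proof -
    have "bij_betw e (Bk j) (P!j)"
      unfolding bij_betw_def
    proof
      have "inj e" using e_bij unfolding bij_betw_def by simp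
      then show "inj_on e (Bk j)" by (rule inj_on_subset) simp
      show "e ` Bk j = P!j"
      proof
        show "e ` Bk j \<subseteq> P!j" unfolding Bk_def by blast
        show "P!j \<subseteq> e ` Bk j"
        proof
          fix i assume i: "i \<in> P!j"
          then have "i \<in> {1..n+1}" using pf(1) j unfolding L_def by blast
          then have "i \<in> e ` UNIV" using e_bij unfolding bij_betw_def by simp
          then obtain k where "i = e k" by blast
          then show "i \<in> e ` Bk j" using i unfolding Bk_def by blast
        qed
      qed
    qed
    then show ?thesis by (rule bij_betw_same_card)
  qed
  have Bk_disj: "Bk j \<inter> Bk j' = {}" if "j < L" "j' < L" "j \<noteq> j'" for j j'
  proof -
    have "\<not> (e k \<in> P!j \<and> e k \<in> P!j')" for k
      using pf(2)[of j j' "e k"] that unfolding L_def by blast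
    then show ?thesis unfolding Bk_def by blast
  qed
  have "\<forall>j\<in>{..<L}. \<exists>C. \<not> affine_dependent C \<and> int (card C) = int (card (P!j)) + 1 \<and> S j = convex hull C"
  proof
    fix j assume "j \<in> {..<L}"
    then have "int (card (P!j)) simplex S j" using simp unfolding L_def by simp
    then show "\<exists>C. \<not> affine_dependent C \<and> int (card C) = int (card (P!j)) + 1 \<and> S j = convex hull C"
      unfolding simplex_def .
  qed
  from bchoice[OF this] obtain C where
    C: "\<forall>j\<in>{..<L}. \<not> affine_dependent (C j) \<and> int (card (C j)) = int (card (P!j)) + 1 \<and> S j = convex hull (C j)"
    by blast
  have indC: "\<not> affine_dependent (C j)" if "j < L" for j using C that by blast
  have cardC: "card (C j) = card (P!j) + 1" if "j < L" for j
  proof -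
    have "int (card (C j)) = int (card (P!j)) + 1" using C that by blast
    then show ?thesis by linarith
  qed
  have SC: "S j = convex hull (C j)" if "j < L" for j using C that by blast
  have finC: "finite (C j)" if "j < L" for j
  proof -
    have "card (C j) > 0" using cardC[OF that] by simp
    then show ?thesis using card_gt_0_iff by blast
  qed
  have cardC2: "card (C j) \<ge> 2" if j: "j < L" for j
  proof -
    have "card (P!j) > 0" using pf(4)[of j] pf(5)[of j] j unfolding L_def by (simp add: card_gt_0_iff)
    then show ?thesis using cardC[OF j] by simp
  qed
  have CV: "C j \<subseteq> Vb (Bk j)" if j: "j < L" for j
  proof
    fix v assume v: "v \<in> C j"
    have "v \<in> convex hull (C j)" using v hull_inc[of v "C j" convex] by simp
    then have "v \<in> S j" using SC[OF j] by simp
    then have "\<forall>k. e k \<notin> P!j \<longrightarrow> v $ k = 0" using simp_block j unfolding L_def by blast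
    then show "v \<in> Vb (Bk j)" unfolding Vb_def Bk_def by simp
  qed
  have affC: "affine hull (C j) = Vb (Bk j)" if j: "j < L" for j
    by (rule aff_eq[OF indC[OF j] CV[OF j]]) (use cardC[OF j] cardBk[OF j] in simp)
  have inaff: "\<pi> j z \<in> affine hull (C j)" if j: "j < L" for j z
    unfolding affC[OF j] \<pi>_def by (rule bp_in)
  define I' where "I' = Sigma {..<L} C"
  define lf where "lf p z = bary (C (fst p)) (\<pi> (fst p) z) (snd p)" for p z
  have blk_char: "\<pi> j x \<in> S j \<longleftrightarrow> (\<forall>v\<in>C j. lf (j,v) x \<ge> 0)" if j: "j < L" for j x
    unfolding SC[OF j] lf_def fst_conv snd_conv by (rule bary_convex[OF finC[OF j] indC[OF j] inaff[OF j]])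
  have Qs_char: "x \<in> Qs \<longleftrightarrow> (\<forall>p\<in>I'. lf p x \<ge> 0)" for x
  proof
    assume "x \<in> Qs"
    then have h: "\<forall>j<L. \<pi> j x \<in> S j" unfolding Qs_def' by simp
    show "\<forall>p\<in>I'. lf p x \<ge> 0"
    proof
      fix p assume "p \<in> I'"
      then obtain j v where p: "p = (j, v)" "j < L" "v \<in> C j" unfolding I'_def by blast
      then show "lf p x \<ge> 0" using blk_char[OF p(2)] h by blast
    qed
  next
    assume h: "\<forall>p\<in>I'. lf p x \<ge> 0"
    have "\<pi> j x \<in> S j" if j: "j < L" for j
      unfolding blk_char[OF j]
    proof
      fix v assume "v \<in> C j"
      then have "(j, v) \<in> I'" unfolding I'_def using j by blast
      then show "lf (j,v) x \<ge> 0" using h by blast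
    qed
    then show "x \<in> Qs" unfolding Qs_def' by simp
  qed
  have "\<forall>p\<in>I'. \<exists>q. \<forall>z. lf p z = inner (fst q) z + snd q"
  proof
    fix p assume "p \<in> I'"
    then obtain j v where p: "p = (j, v)" "j < L" "v \<in> C j" unfolding I'_def by blast
    have lin: "linear (\<pi> j)" unfolding \<pi>_def by (rule bp_lin)
    obtain r \<beta> where "\<forall>z. bary (C j) (\<pi> j z) v = inner r z + \<beta>"
      using bary_affine_fun[OF finC[OF p(2)] indC[OF p(2)] lin inaff[OF p(2)]] by blast
    then have "\<forall>z. lf p z = inner (fst (r, \<beta>)) z + snd (r, \<beta>)" unfolding lf_def p(1) by simp
    then show "\<exists>q. \<forall>z. lf p z = inner (fst q) z + snd q" by blast
  qed
  from bchoice[OF this] obtain q where q: "\<forall>p\<in>I'. \<forall>z. lf p z = inner (fst (q p)) z + snd (q p)" by blast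
  define r where "r p = fst (q p)" for p
  define \<beta> where "\<beta> p = snd (q p)" for p
  have lrep: "lf p z = inner (r p) z + \<beta> p" if "p \<in> I'" for p z
    using q that unfolding r_def \<beta>_def by blast
  have lvert: "lf (j,v) w = (if w = v then 1 else 0)" if j: "j < L" and w: "w \<in> C j" for j v w
  proof -
    have "\<pi> j w = w" unfolding \<pi>_def using CV[OF j] w by (intro bp_id) blast
    then show ?thesis unfolding lf_def fst_conv snd_conv using bary_vertex[OF finC[OF j] indC[OF j] w, of v]
      by simp
  qed
  have r_ne: "r p \<noteq> 0" if p: "p \<in> I'" for p
  proof
    assume r0: "r p = 0"
    obtain j v where pj: "p = (j, v)" "j < L" "v \<in> C j" using p unfolding I'_def by blast
    have "card (C j - {v}) \<ge> 1" using cardC2[OF pj(2)] pj(3) finC[OF pj(2)] by simp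
    then have "C j - {v} \<noteq> {}" by (intro notI) simp
    then obtain w where "w \<in> C j - {v}" by blast
    then have w: "w \<in> C j" "w \<noteq> v" by auto
    have "lf p v = 1" unfolding pj(1) using lvert[OF pj(2) pj(3)] by simp
    moreover have "lf p w = 0" unfolding pj(1) using lvert[OF pj(2) w(1)] w(2) by simp
    moreover have "lf p v = lf p w" using lrep[OF p] r0 by simp
    ultimately show False by simp
  qed
  have cQs: "c \<in> interior Qs" using c_int unfolding Qs_def .
  then obtain \<epsilon> where \<epsilon>: "\<epsilon> > 0" "ball c \<epsilon> \<subseteq> Qs" using mem_interior by blast
  define \<gamma> where "\<gamma> p = lf p c" for p
  have gpos: "\<gamma> p > 0" if p: "p \<in> I'" for p
  proof -
    define R where "R = r p"
    have nR: "norm R > 0" using r_ne[OF p] unfolding R_def by simp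
    define z where "z = c - (\<epsilon> / (2 * norm R)) *\<^sub>R R"
    have "dist c z = \<epsilon> / 2" unfolding z_def dist_norm using nR \<epsilon>(1) by simp
    then have "z \<in> ball c \<epsilon>" using \<epsilon>(1) by simp
    then have "z \<in> Qs" using \<epsilon>(2) by blast
    then have lz: "lf p z \<ge> 0" using Qs_char p by blast
    have "lf p z = inner R c + \<beta> p - (\<epsilon> / (2 * norm R)) * inner R R"
      unfolding lrep[OF p] z_def R_def by (simp add: inner_diff_right)
    also have "inner R R = norm R * norm R" by (simp add: power2_norm_eq_inner[symmetric] power2_eq_square)
    also have "inner R c + \<beta> p = \<gamma> p" unfolding \<gamma>_def lrep[OF p] R_def ..
    also have "(\<epsilon> / (2 * norm R)) * (norm R * norm R) = \<epsilon> * norm R / 2" using nR by (simp add: field_simps)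
    finally have "lf p z = \<gamma> p - \<epsilon> * norm R / 2" .
    then have "\<gamma> p \<ge> \<epsilon> * norm R / 2" using lz by linarith
    moreover have "\<epsilon> * norm R / 2 > 0" using nR \<epsilon>(1) by simp
    ultimately show ?thesis by linarith
  qed
  define u where "u p = (- 1 / \<gamma> p) *\<^sub>R r p" for p
  have key_inner: "inner x (u p) = 1 - lf p (x + c) / \<gamma> p" if p: "p \<in> I'" for p x
  proof -
    have g: "\<gamma> p = inner (r p) c + \<beta> p" unfolding \<gamma>_def by (rule lrep[OF p])
    have "lf p (x + c) = inner (r p) x + \<gamma> p" unfolding lrep[OF p] g by (simp add: inner_add_right)
    moreover have "inner x (u p) = - inner (r p) x / \<gamma> p" unfolding u_def by (simp add: inner_commute)
    ultimately show ?thesis using gpos[OF p] by (simp add: field_simps)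
  qed
  have memQ': "x \<in> Q' \<longleftrightarrow> x + c \<in> Qs" for x
  proof
    assume "x \<in> Q'"
    then obtain y where "y \<in> Qs" "x = y - c" unfolding Q'_def by blast
    then show "x + c \<in> Qs" by simp
  next
    assume "x + c \<in> Qs"
    moreover have "x = (x + c) - c" by simp
    ultimately show "x \<in> Q'" unfolding Q'_def by (rule rev_image_eqI)
  qed
  have G1: "Q' = {x. \<forall>p\<in>I'. inner x (u p) \<le> 1}"
  proof (intro set_eqI)
    fix x
    have "x \<in> Q' \<longleftrightarrow> (\<forall>p\<in>I'. lf p (x + c) \<ge> 0)" using memQ' Qs_char by simp
    also have "\<dots> \<longleftrightarrow> (\<forall>p\<in>I'. inner x (u p) \<le> 1)"
    proof (intro ball_cong refl)
      fix p assume p: "p \<in> I'"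
      show "lf p (x + c) \<ge> 0 \<longleftrightarrow> inner x (u p) \<le> 1"
        unfolding key_inner[OF p] using gpos[OF p] by (simp add: zero_le_divide_iff)
    qed
    finally show "x \<in> Q' \<longleftrightarrow> x \<in> {x. \<forall>p\<in>I'. inner x (u p) \<le> 1}" by simp
  qed
  have pair_img: "{j} \<times> C j = (\<lambda>v. (j, v)) ` C j" for j by blast
  have G2: "(\<Sum>p\<in>{j} \<times> C j. \<gamma> p *\<^sub>R u p) = 0" if j: "j \<in> {..<L}" for j
  proof -
    have jL: "j < L" using j by simp
    have "\<forall>z. (\<Sum>v\<in>C j. lf (j,v) z) = 1"
      unfolding lf_def fst_conv snd_conv using bary_props[OF finC[OF jL] indC[OF jL] inaff[OF jL]] by blast
    moreover have "(\<Sum>v\<in>C j. lf (j,v) z) = inner (\<Sum>v\<in>C j. r (j,v)) z + (\<Sum>v\<in>C j. \<beta> (j,v))" for z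
    proof -
      have "(\<Sum>v\<in>C j. lf (j,v) z) = (\<Sum>v\<in>C j. inner (r (j,v)) z + \<beta> (j,v))"
      proof (rule sum.cong[OF refl])
        fix v assume "v \<in> C j"
        then have "(j,v) \<in> I'" unfolding I'_def using jL by blast
        then show "lf (j,v) z = inner (r (j,v)) z + \<beta> (j,v)" by (rule lrep)
      qed
      then show ?thesis by (simp add: sum.distrib inner_sum_left)
    qed
    ultimately have hz: "inner (\<Sum>v\<in>C j. r (j,v)) z + (\<Sum>v\<in>C j. \<beta> (j,v)) = 1" for z by metis
    have "(\<Sum>v\<in>C j. \<beta> (j,v)) = 1" using hz[of 0] by simp
    then have "inner (\<Sum>v\<in>C j. r (j,v)) (\<Sum>v\<in>C j. r (j,v)) = 0" using hz[of "\<Sum>v\<in>C j. r (j,v)"] by simp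
    then have R0: "(\<Sum>v\<in>C j. r (j,v)) = 0" by simp
    have "(\<Sum>p\<in>{j} \<times> C j. \<gamma> p *\<^sub>R u p) = (\<Sum>v\<in>C j. \<gamma> (j,v) *\<^sub>R u (j,v))"
      unfolding pair_img by (subst sum.reindex) (auto simp: inj_on_def)
    also have "\<dots> = (\<Sum>v\<in>C j. - r (j,v))"
    proof (rule sum.cong[OF refl])
      fix v assume "v \<in> C j"
      then have "(j,v) \<in> I'" unfolding I'_def using jL by blast
      then have "\<gamma> (j,v) > 0" by (rule gpos)
      then show "\<gamma> (j,v) *\<^sub>R u (j,v) = - r (j,v)" unfolding u_def by simp
    qed
    also have "\<dots> = - (\<Sum>v\<in>C j. r (j,v))" by (simp add: sum_negf)
    finally show ?thesis using R0 by simp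
  qed
  have G3: "\<exists>x\<in>Q'. {p\<in>I'. inner x (u p) = 1} = \<sigma>"
    if s: "\<sigma> \<subseteq> I'" "\<forall>j\<in>{..<L}. \<not> {j} \<times> C j \<subseteq> \<sigma>" for \<sigma>
  proof -
    define T where "T j = {v\<in>C j. (j,v) \<notin> \<sigma>}" for j
    have Tsub: "T j \<subseteq> C j" for j unfolding T_def by blast
    have Tne: "T j \<noteq> {}" if j: "j < L" for j
    proof
      assume "T j = {}"
      then have "{j} \<times> C j \<subseteq> \<sigma>" unfolding T_def by blast
      then show False using s(2) j by blast
    qed
    define bc where "bc j = (\<Sum>v\<in>T j. (1 / real (card (T j))) *\<^sub>R v)" for j
    have bcV: "bc j \<in> Vb (Bk j)" if j: "j < L" for j
      unfolding bc_def
    proof (rule subspace_sum[OF Vb_subspace])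
      fix v assume "v \<in> T j"
      then have "v \<in> Vb (Bk j)" using Tsub CV[OF j] by blast
      then show "(1 / real (card (T j))) *\<^sub>R v \<in> Vb (Bk j)"
        using subspace_scale[OF Vb_subspace] by (simp add: scaleR_conv_of_real)
    qed
    define z where "z = (\<Sum>j<L. bc j)"
    have piz: "\<pi> i z = bc i" if i: "i < L" for i
    proof -
      have "\<pi> i z = (\<Sum>j<L. \<pi> i (bc j))" unfolding z_def \<pi>_def by (rule linear_sum[OF bp_lin])
      also have "\<dots> = (\<Sum>j<L. if j = i then bc i else 0)"
      proof (rule sum.cong[OF refl])
        fix j assume "j \<in> {..<L}"
        then have jL: "j < L" by simp
        show "\<pi> i (bc j) = (if j = i then bc i else 0)"
        proof (cases "j = i")
          case True
          then show ?thesis unfolding \<pi>_def using bp_id[OF bcV[OF jL]] by simp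
        next
          case False
          have "Bk i \<inter> Bk j = {}" using Bk_disj[OF i jL] False by blast
          then show ?thesis unfolding \<pi>_def using bp_zero[OF _ bcV[OF jL]] False by simp
        qed
      qed
      also have "\<dots> = bc i" using i by simp
      finally show ?thesis .
    qed
    have lz: "lf (i,v) z = (if v \<in> T i then 1 / real (card (T i)) else 0)" if i: "i < L" for i v
      unfolding lf_def fst_conv snd_conv piz[OF i] bc_def
      using bary_center[OF finC[OF i] indC[OF i] Tsub Tne[OF i]] by simp
    have zQ: "z \<in> Qs" unfolding Qs_char
    proof
      fix p assume "p \<in> I'"
      then obtain i v where p: "p = (i, v)" "i < L" unfolding I'_def by blast
      show "lf p z \<ge> 0" unfolding p(1) lz[OF p(2)] by simp
    qed
    define x where "x = z - c"
    have xQ: "x \<in> Q'" unfolding memQ' x_def using zQ by simp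
    have "{p\<in>I'. inner x (u p) = 1} = \<sigma>"
    proof (intro set_eqI iffI)
      fix p assume "p \<in> {p\<in>I'. inner x (u p) = 1}"
      then have p: "p \<in> I'" "inner x (u p) = 1" by auto
      then obtain i v where pv: "p = (i, v)" "i < L" "v \<in> C i" unfolding I'_def by blast
      have "lf p z / \<gamma> p = 0" using p(2) key_inner[OF p(1)] unfolding x_def by simp
      then have "lf p z = 0" using gpos[OF p(1)] by simp
      moreover have "finite (T i)" by (rule finite_subset[OF Tsub finC[OF pv(2)]])
      then have "card (T i) > 0" using Tne[OF pv(2)] by (simp add: card_gt_0_iff)
      ultimately have "v \<notin> T i" unfolding pv(1) lz[OF pv(2)] by (auto split: if_splits)
      then show "p \<in> \<sigma>" unfolding T_def pv(1) using pv(3) by blast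
    next
      fix p assume ps: "p \<in> \<sigma>"
      then have p: "p \<in> I'" using s(1) by blast
      then obtain i v where pv: "p = (i, v)" "i < L" "v \<in> C i" unfolding I'_def by blast
      have "v \<notin> T i" unfolding T_def using ps pv(1) by blast
      then have "lf p z = 0" unfolding pv(1) lz[OF pv(2)] by simp
      then have "inner x (u p) = 1" using key_inner[OF p] unfolding x_def by simp
      then show "p \<in> {p\<in>I'. inner x (u p) = 1}" using p by blast
    qed
    then show ?thesis using xQ by blast
  qed
  have geoR: "complex_iso I' {\<sigma>. \<sigma>\<noteq>{} \<and> \<sigma> \<subseteq> I' \<and> (\<forall>j\<in>{..<L}. \<not> {j} \<times> C j \<subseteq> \<sigma>)}
           (bd_vertices (polar_dual Q')) (bd_faces (polar_dual Q'))"
  proof (rule geo[where \<gamma> = \<gamma> and u = u])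
    show "finite I'" unfolding I'_def using finC by (intro finite_SigmaI) auto
    show "{j} \<times> C j \<subseteq> I'" if "j \<in> {..<L}" for j unfolding I'_def using that by blast
    show "I' \<subseteq> (\<Union>j\<in>{..<L}. {j} \<times> C j)" unfolding I'_def by blast
    show "\<not> {j} \<times> C j \<subseteq> {a}" if j: "j \<in> {..<L}" and "a \<in> I'" for j a
    proof
      assume "{j} \<times> C j \<subseteq> {a}"
      then have "card ({j} \<times> C j) \<le> card {a}" by (intro card_mono) auto
      then show False using cardC2[of j] j by (simp add: card_cartesian_product_singleton)
    qed
    show "\<gamma> a > 0" if "a \<in> I'" for a using gpos that by blast
    show "Q' = {x. \<forall>a\<in>I'. inner x (u a) \<le> 1}" by (rule G1)
    show "(\<Sum>a\<in>{j} \<times> C j. \<gamma> a *\<^sub>R u a) = 0" if "j \<in> {..<L}" for j using G2 that by blast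
    show "\<exists>x\<in>Q'. {a\<in>I'. inner x (u a) = 1} = \<sigma>"
      if "\<sigma> \<subseteq> I'" "\<forall>j\<in>{..<L}. \<not> {j} \<times> C j \<subseteq> \<sigma>" for \<sigma> using G3 that by blast
    have "n + 1 \<in> {1..n+1}" by simp
    then obtain j where j: "j < L" "n + 1 \<in> P!j" using pf(3) unfolding L_def by blast
    have "C j \<noteq> {}" using cardC2[OF j(1)] by auto
    then obtain v where "v \<in> C j" by blast
    then have "(j, v) \<in> I'" unfolding I'_def using j(1) by blast
    then show "I' \<noteq> {}" by blast
  qed
  have "\<forall>j\<in>{..<L}. \<exists>g. bij_betw g (Kblk P j) (C j)"
  proof
    fix j assume "j \<in> {..<L}"
    then have j: "j < L" by simp
    have finP: "finite (P!j)" using pf(5) j unfolding L_def by blast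
    show "\<exists>g. bij_betw g (Kblk P j) (C j)"
    proof (rule finite_same_card_bij)
      show "finite (Kblk P j)" unfolding Kblk_def using finP by simp
      show "finite (C j)" by (rule finC[OF j])
      show "card (Kblk P j) = card (C j)" using card_Kblk[OF finP] cardC[OF j] by simp
    qed
  qed
  from bchoice[OF this] obtain g where g: "\<forall>j\<in>{..<L}. bij_betw (g j) (Kblk P j) (C j)" by blast
  have Kdisj: "j = j'" if "j \<in> {..<L}" "j' \<in> {..<L}" "s \<in> Kblk P j" "s \<in> Kblk P j'" for j j' s
  proof (cases s)
    case (Inl i)
    then have "i \<in> P!j" "i \<in> P!j'" using that(3,4) unfolding Kblk_def by auto
    then show ?thesis using pf(2)[of j j' i] that(1,2) unfolding L_def by simp
  next
    case (Inr k)
    then show ?thesis using that(3,4) unfolding Kblk_def by auto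
  qed
  define h where "h = (\<lambda>s. (THE j. j\<in>{..<L} \<and> s \<in> Kblk P j, g (THE j. j \<in> {..<L} \<and> s \<in> Kblk P j) s))"
  have hb: "bij_betw h (\<Union>j\<in>{..<L}. Kblk P j) (Sigma {..<L} C)"
    and hB: "\<And>j. j\<in>{..<L} \<Longrightarrow> h ` Kblk P j = {j} \<times> C j"
  proof -
    have Kd: "\<forall>j\<in>{..<L}. \<forall>j'\<in>{..<L}. \<forall>s. s \<in> Kblk P j \<longrightarrow> s \<in> Kblk P j' \<longrightarrow> j = j'"
      using Kdisj by blast
    have hd: "\<forall>s. h s = (THE j. j\<in>{..<L} \<and> s \<in> Kblk P j, g (THE j. j \<in> {..<L} \<and> s \<in> Kblk P j) s)"
      unfolding h_def by simp
    have bb: "bij_betw h (\<Union>j\<in>{..<L}. Kblk P j) (Sigma {..<L} C) \<and> (\<forall>j\<in>{..<L}. h ` Kblk P j = {j} \<times> C j)"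
      by (rule block_bij[OF g Kd hd])
    show "bij_betw h (\<Union>j\<in>{..<L}. Kblk P j) (Sigma {..<L} C)" using bb by (rule conjunct1)
    show "h ` Kblk P j = {j} \<times> C j" if "j\<in>{..<L}" for j using bb that by blast
  qed
  have KV: "K_vertices n P = (\<Union>j\<in>{..<L}. Kblk P j)" unfolding L_def by (rule KV_union[OF part])
  have combR: "complex_iso (K_vertices n P) (K_faces n P) I'
      {\<sigma>. \<sigma>\<noteq>{} \<and> \<sigma> \<subseteq> I' \<and> (\<forall>j\<in>{..<L}. \<not> {j} \<times> C j \<subseteq> \<sigma>)}"
    unfolding K_faces_char[OF part] L_def[symmetric] I'_def
  proof (rule iso_blocks)
    show "bij_betw h (K_vertices n P) (Sigma {..<L} C)" unfolding KV by (rule hb)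
    show "Kblk P j \<subseteq> K_vertices n P" if "j \<in> {..<L}" for j unfolding KV using that by blast
    show "h ` Kblk P j = {j} \<times> C j" if "j \<in> {..<L}" for j by (rule hB[OF that])
  qed
  have "complex_iso (K_vertices n P) (K_faces n P) (bd_vertices (polar_dual Q')) (bd_faces (polar_dual Q'))"
    by (rule complex_iso_trans[OF combR geoR])
  then show ?thesis unfolding Q'_def Qs_def .
qed

end
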